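(* Let $b\ge1$, $c_{\mathrm{ov}}\ge0$, $c_i>0$, $c_i^\sharp\ge0$, $d_i:=c_{\mathrm{ov}}+\sum_{j\ge i}(c_j+c_j^\sharp)$, $L^1_{i,\{k,\dots,b\}}\ge0$, and consider the program $\min\sum_id_iq_i$ subject to $q\ge0$ and $g_i(q):=\left(\sum_{s=1}^iq_s\right)^2-\sum_{s=1}^iq_sL^1_{i,\{s,\dots,b\}}\ge0$ for $i\in[b]$. Let $q^\star$ be a KKT point, i.e. $q^\star$ is feasible and there are $\lambda_i,\eta_i\ge0$ with $0=d_k-\sum_{i=k}^b\lambda_i\big(2\sum_{s=1}^iq^\star_s-L^1_{i,\{k,\dots,b\}}\big)-\eta_k$ for all $k$, $\lambda_ig_i(q^\star)=0$ and $\eta_iq_i^\star=0$ for all $i$. If $\{j:q^\star_j>0\}=\{k\}$, then $$q^\star_k=\max_{i\ge k}L^1_{i,\{k,\dots,b\}}.$$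
   Context: This program is a reformulation of the cost minimization for randomized progressive training under layer-wise $(L^0,L^1)$-smoothness. *)

theory Defs
  imports Complex_Main
begin

text \<open>Indices range over [b] = {1..b}. L1 i k stands for L^1_{i,{k,...,b}}.\<close>

definition dcoef :: "nat \<Rightarrow> real \<Rightarrow> (nat \<Rightarrow> real) \<Rightarrow> (nat \<Rightarrow> real) \<Rightarrow> nat \<Rightarrow> real" where
  "dcoef b cov c cs i = cov + (\<Sum>j=i..b. c j + cs j)"

definition gcon :: "nat \<Rightarrow> (nat \<Rightarrow> nat \<Rightarrow> real) \<Rightarrow> (nat \<Rightarrow> real) \<Rightarrow> nat \<Rightarrow> real" where
  "gcon b L1 q i = (\<Sum>s=1..i. q s)^2 - (\<Sum>s=1..i. q s * L1 i s)"

end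

theory Submission
  imports Defs
begin

theorem lemma5:
  fixes b :: nat and cov :: real and c cs q lam eta :: "nat \<Rightarrow> real"
    and L1 :: "nat \<Rightarrow> nat \<Rightarrow> real" and k :: nat
  assumes hb: "b \<ge> 1"
    and hcov: "cov \<ge> 0"
    and hc: "\<forall>i\<in>{1..b}. c i > 0"
    and hcs: "\<forall>i\<in>{1..b}. cs i \<ge> 0"
    and hL: "\<forall>i\<in>{1..b}. \<forall>j\<in>{1..b}. L1 i j \<ge> 0"
    and feas_q: "\<forall>i\<in>{1..b}. q i \<ge> 0"
    and feas_g: "\<forall>i\<in>{1..b}. gcon b L1 q i \<ge> 0"
    and lam_nn: "\<forall>i\<in>{1..b}. lam i \<ge> 0"
    and eta_nn: "\<forall>i\<in>{1..b}. eta i \<ge> 0"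
    and stat: "\<forall>m\<in>{1..b}. 0 = dcoef b cov c cs m
                 - (\<Sum>i=m..b. lam i * (2 * (\<Sum>s=1..i. q s) - L1 i m)) - eta m"
    and comp_g: "\<forall>i\<in>{1..b}. lam i * gcon b L1 q i = 0"
    and comp_q: "\<forall>i\<in>{1..b}. eta i * q i = 0"
    and supp: "{j\<in>{1..b}. q j > 0} = {k}"
  shows "q k = Max ((\<lambda>i. L1 i k) ` {k..b})"
proof -
  have kb: "k \<in> {1..b}" using supp by blast
  have qk: "q k > 0" using supp by blast
  have qz: "\<forall>s\<in>{1..b}. s \<noteq> k \<longrightarrow> q s = 0"
  proof (intro ballI impI)
    fix s assume s: "s \<in> {1..b}" "s \<noteq> k"
    hence "\<not> q s > 0" using supp by blast
    thus "q s = 0" using feas_q s by force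
  qed
  have sumQ: "(\<Sum>s=1..i. q s) = q k" if "k \<le> i" "i \<le> b" for i
  proof -
    have "(\<Sum>s=1..i. q s) = (\<Sum>s=1..i. if s = k then q k else 0)"
      by (rule sum.cong) (use qz that in auto)
    also have "\<dots> = q k" using kb that by simp
    finally show ?thesis .
  qed
  have sumL: "(\<Sum>s=1..i. q s * L1 i s) = q k * L1 i k" if "k \<le> i" "i \<le> b" for i
  proof -
    have "(\<Sum>s=1..i. q s * L1 i s) = (\<Sum>s=1..i. if s = k then q k * L1 i k else 0)"
      by (rule sum.cong) (use qz that in auto)
    also have "\<dots> = q k * L1 i k" using kb that by simp
    finally show ?thesis .
  qed
  have gi: "gcon b L1 q i = q k * (q k - L1 i k)" if "i \<in> {k..b}" for i
    using sumQ sumL that unfolding gcon_def by (auto simp: power2_eq_square algebra_simps)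
  have ge: "L1 i k \<le> q k" if "i \<in> {k..b}" for i
  proof -
    have "i \<in> {1..b}" using that kb by auto
    hence "0 \<le> q k * (q k - L1 i k)" using feas_g gi[OF that] by (metis)
    thus ?thesis using qk by (simp add: zero_le_mult_iff)
  qed
  have etak: "eta k = 0" using comp_q kb qk by auto
  have dpos: "dcoef b cov c cs k > 0"
  proof -
    have "(\<Sum>j=k..b. c j + cs j) \<ge> c k + cs k"
    proof (rule member_le_sum)
      show "k \<in> {k..b}" using kb by auto
      show "finite {k..b}" by simp
      fix x assume "x \<in> {k..b} - {k}"
      hence "x \<in> {1..b}" using kb by auto
      thus "0 \<le> c x + cs x" using hc hcs by (meson add_nonneg_nonneg less_imp_le)
    qed
    thus ?thesis unfolding dcoef_def using hcov hc hcs kb by force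
  qed
  obtain i where i: "i \<in> {k..b}" "lam i > 0"
  proof (rule ccontr)
    assume "\<not> thesis"
    hence "\<forall>i\<in>{k..b}. lam i = 0" using that lam_nn kb
      by (metis atLeastAtMost_iff le_less not_le order_trans)
    hence "(\<Sum>i=k..b. lam i * (2 * (\<Sum>s=1..i. q s) - L1 i k)) = 0" by simp
    thus False using stat kb etak dpos by force
  qed
  have "i \<in> {1..b}" using i kb by auto
  hence "gcon b L1 q i = 0" using comp_g i by (metis less_irrefl mult_eq_0_iff)
  hence eq: "q k = L1 i k" using gi[OF i(1)] qk by simp
  show ?thesis
    by (rule sym, rule Max_eqI) (use ge i eq in auto)
qed

end
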